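(* Let $R$ be a commutative ring with unit, let $G=(V,E)$ be a finite digraph and $f:V\to[0,+\infty)$ a discrete Morse function on $G$ such that every vertex $v$ with $f(v)=0$ has out-degree $1$ and in-degree $1$. Let $\tilde G$ be the $\mathcal M$-collapse of $(G,f)$. Then the inclusion $i:\tilde G\to G$ induces isomorphisms $H_n(\tilde G;R)\xrightarrow{\cong}H_n(G;R)$ of path homology groups for all $n\ge0$.
   Context: A digraph $G=(V,E)$ consists of a set $V$ and $E\subseteq (V\times V)\setminus\{(v,v)\}$; $(u,v)\in E$ is written $u\to v$. The out-degree (in-degree) of $v$ is the number of edges starting (ending) at $v$. An allowed elementary $n$-path is a sequence $v_0\cdots v_n$ of vertices with $v_{i-1}\to v_i\in E$ for all $1\le i\le n$. For $n\ge0$, $\Lambda_n(V)$ is the free $R$-module on sequences $v_0\cdots v_n$ with $v_{i-1}\ne v_i$, with $\partial_n=\sum_{i=0}^n(-1)^id_i$, $d_i$ deleting $v_i$ and sequences with two equal consecutive entries taken to be $0$. $P_n(G)$ is the span of allowed elementary $n$-paths, $\Omega_n(G)=\{x\in P_n(G):\partial_nx\in P_{n-1}(G)\}$, and the path homology $H_n(G;R)$ is the homology of $(\Omega_*(G),\partial_* )$. For a subdigraph $\tilde G\subseteq G$, the inclusion induces the inclusion of chain complexes $\Omega_*(\tilde G)\subseteq\Omega_*(G)$ and hence maps on path homology. A map $f:V\to[0,+\infty)$ is a discrete Morse function on $G$ if for every allowed elementary path $v_0\cdots v_n$: (i) there is at most one index $i$ with $f(v_i)=0$ such that $v_0\cdots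 v_{i-1}v_{i+1}\cdots v_n$ is an allowed elementary path; (ii) there is at most one vertex $u$ with $f(u)=0$ such that for some $-1\le j\le n$, $v_0\cdots v_juv_{j+1}\cdots v_n$ (meaning $uv_0\cdots v_n$ if $j=-1$, $v_0\cdots v_nu$ if $j=n$) is an allowed elementary path. $\mathcal M$-collapse: under the degree hypothesis, each vertex $v$ with $f(v)=0$ has a unique in-neighbour $u$ and out-neighbour $w$ ($u\to v\to w$, with $u,v,w$ distinct). Let $Z$ be the set of zeros $v$ of $f$ for which $u\to w$ is also an edge of $G$. The $\mathcal M$-collapse $\tilde G$ has vertex set $V\setminus Z$ and edge set $E\setminus\{u\to v,\ v\to w: v\in Z\}$ (obtained by successively substituting each such $u\to v\to w$ by $u\to w$), and $\tilde f=f|_{V\setminus Z}$. *)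

theory Defs
  imports Complex_Main
begin

text \<open>A finite digraph: finite vertex set V, edge set E \<subseteq> V \<times> V without loops.
  Elementary sequences v0...vn are lists of length n+1.\<close>

definition finite_digraph :: "'a set \<Rightarrow> ('a \<times> 'a) set \<Rightarrow> bool" where
  "finite_digraph V E \<longleftrightarrow> finite V \<and> E \<subseteq> V \<times> V \<and> (\<forall>v. (v, v) \<notin> E)"

definition regular_seq :: "'a list \<Rightarrow> bool" where
  "regular_seq p \<longleftrightarrow> (\<forall>i. Suc i < length p \<longrightarrow> p ! i \<noteq> p ! Suc i)"

definition allowed_path :: "'a set \<Rightarrow> ('a \<times> 'a) set \<Rightarrow> 'a list \<Rightarrow> bool" where
  "allowed_path V E p \<longleftrightarrow> p \<noteq> [] \<and> set p \<subseteq> V \<and>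
      (\<forall>i. Suc i < length p \<longrightarrow> (p ! i, p ! Suc i) \<in> E)"

definition Lambda :: "'a set \<Rightarrow> nat \<Rightarrow> ('a list \<Rightarrow> 'r::comm_ring_1) set" where
  "Lambda V n = {x. \<forall>p. x p \<noteq> 0 \<longrightarrow> length p = Suc n \<and> set p \<subseteq> V \<and> regular_seq p}"

definition Pch :: "'a set \<Rightarrow> ('a \<times> 'a) set \<Rightarrow> nat \<Rightarrow> ('a list \<Rightarrow> 'r::comm_ring_1) set" where
  "Pch V E n = {x. \<forall>p. x p \<noteq> 0 \<longrightarrow> length p = Suc n \<and> allowed_path V E p}"

text \<open>Boundary \<partial>_n : \<Lambda>_n \<rightarrow> \<Lambda>_{n-1}, \<partial>_n = \<Sum>_i (-1)^i d_i, with \<partial>_0 = 0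
  (unreduced homology). The coefficient of a regular (n-1)-sequence w in \<partial>_n x is the
  signed sum of coefficients of the sequences obtained from w by inserting a vertex at
  position i; sequences with equal consecutive entries are 0.\<close>
definition bd :: "'a set \<Rightarrow> nat \<Rightarrow> ('a list \<Rightarrow> 'r::comm_ring_1) \<Rightarrow> ('a list \<Rightarrow> 'r)" where
  "bd V n x = (\<lambda>w. if n = 0 then 0
      else if length w = n \<and> regular_seq w
        then (\<Sum>i\<le>n. (-1) ^ i * (\<Sum>v\<in>V. x (take i w @ v # drop i w)))
        else 0)"

definition Omega :: "'a set \<Rightarrow> ('a \<times> 'a) set \<Rightarrow> nat \<Rightarrow> ('a list \<Rightarrow> 'r::comm_ring_1) set" where
  "Omega V E n = {x \<in> Pch V E n. bd V n x \<in> Pch V E (n - 1)}"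

definition cycles :: "'a set \<Rightarrow> ('a \<times> 'a) set \<Rightarrow> nat \<Rightarrow> ('a list \<Rightarrow> 'r::comm_ring_1) set" where
  "cycles V E n = {x \<in> Omega V E n. bd V n x = (\<lambda>_. 0)}"

definition boundaries :: "'a set \<Rightarrow> ('a \<times> 'a) set \<Rightarrow> nat \<Rightarrow> ('a list \<Rightarrow> 'r::comm_ring_1) set" where
  "boundaries V E n = bd V (Suc n) ` Omega V E (Suc n)"

definition hclass :: "'a set \<Rightarrow> ('a \<times> 'a) set \<Rightarrow> nat \<Rightarrow> ('a list \<Rightarrow> 'r::comm_ring_1) \<Rightarrow> ('a list \<Rightarrow> 'r) set" where
  "hclass V E n x = {y \<in> cycles V E n. (\<lambda>p. x p - y p) \<in> boundaries V E n}"

definition path_homology :: "'a set \<Rightarrow> ('a \<times> 'a) set \<Rightarrow> nat \<Rightarrow> ('a list \<Rightarrow> 'r::comm_ring_1) set set" where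
  "path_homology V E n = hclass V E n ` cycles V E n"

definition induced_map :: "'a set \<Rightarrow> ('a \<times> 'a) set \<Rightarrow> nat \<Rightarrow> ('a list \<Rightarrow> 'r::comm_ring_1) set \<Rightarrow> ('a list \<Rightarrow> 'r) set" where
  "induced_map V E n X = (\<Union>x\<in>X. hclass V E n x)"

definition discrete_morse :: "'a set \<Rightarrow> ('a \<times> 'a) set \<Rightarrow> ('a \<Rightarrow> real) \<Rightarrow> bool" where
  "discrete_morse V E f \<longleftrightarrow> (\<forall>v\<in>V. f v \<ge> 0) \<and>
    (\<forall>p. allowed_path V E p \<longrightarrow>
       (\<forall>i j. i < length p \<and> f (p ! i) = 0 \<and> allowed_path V E (take i p @ drop (Suc i) p) \<and>
              j < length p \<and> f (p ! j) = 0 \<and> allowed_path V E (take j p @ drop (Suc j) p)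
              \<longrightarrow> i = j) \<and>
       (\<forall>u u'. u \<in> V \<and> f u = 0 \<and> (\<exists>j\<le>length p. allowed_path V E (take j p @ u # drop j p)) \<and>
               u' \<in> V \<and> f u' = 0 \<and> (\<exists>j\<le>length p. allowed_path V E (take j p @ u' # drop j p))
              \<longrightarrow> u = u'))"

definition zero_deg_hyp :: "'a set \<Rightarrow> ('a \<times> 'a) set \<Rightarrow> ('a \<Rightarrow> real) \<Rightarrow> bool" where
  "zero_deg_hyp V E f \<longleftrightarrow> (\<forall>v\<in>V. f v = 0 \<longrightarrow>
      card {w. (v, w) \<in> E} = 1 \<and> card {u. (u, v) \<in> E} = 1)"

definition collapse_set :: "'a set \<Rightarrow> ('a \<times> 'a) set \<Rightarrow> ('a \<Rightarrow> real) \<Rightarrow> 'a set" where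
  "collapse_set V E f = {v \<in> V. f v = 0 \<and>
      (\<exists>u w. (u, v) \<in> E \<and> (v, w) \<in> E \<and> (u, w) \<in> E)}"

definition collapse_V :: "'a set \<Rightarrow> ('a \<times> 'a) set \<Rightarrow> ('a \<Rightarrow> real) \<Rightarrow> 'a set" where
  "collapse_V V E f = V - collapse_set V E f"

text \<open>Remove the edges u\<rightarrow>v and v\<rightarrow>w for v \<in> Z (under the degree hypothesis these
  are exactly the edges incident to v).\<close>
definition collapse_E :: "'a set \<Rightarrow> ('a \<times> 'a) set \<Rightarrow> ('a \<Rightarrow> real) \<Rightarrow> ('a \<times> 'a) set" where
  "collapse_E V E f = E - {(a, b) \<in> E. a \<in> collapse_set V E f \<or> b \<in> collapse_set V E f}"

end

theory Submission
  imports Defs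
begin

definition ins :: "'a \<Rightarrow> nat \<Rightarrow> 'a list \<Rightarrow> 'a list" where
  "ins a i w = take i w @ a # drop i w"

lemma ins_0[simp]: "ins a 0 w = a # w"
  by (simp add: ins_def)

lemma ins_Suc_Cons[simp]: "ins a (Suc i) (b # r) = b # ins a i r"
  by (simp add: ins_def)

lemma length_ins[simp]: "i \<le> length w \<Longrightarrow> length (ins a i w) = Suc (length w)"
  by (simp add: ins_def)

lemma ins_ins_swap:
  assumes "i \<le> j" "j \<le> length w"
  shows "ins b (Suc j) (ins a i w) = ins a i (ins b j w)"
  using assms
proof (induction w arbitrary: i j)
  case Nil
  then show ?case by simp
next
  case (Cons c w)
  show ?case
  proof (cases i)
    case 0
    then show ?thesis by simp
  next
    case (Suc i')
    then obtain j' where "j = Suc j'" using Cons.prems by (cases j) auto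
    then show ?thesis using Cons Suc by simp
  qed
qed

lemma ins_Suc_same:
  assumes "i < length w"
  shows "ins (w ! i) (Suc i) w = ins (w ! i) i w"
  using assms
proof (induction w arbitrary: i)
  case Nil
  then show ?case by simp
next
  case (Cons c w)
  then show ?case by (cases i) (auto simp: ins_def)
qed

lemma regular_seq_succ: "regular_seq p = successively (\<noteq>) p"
  by (simp add: regular_seq_def successively_conv_nth)

lemma allowed_succ: "allowed_path V E p \<longleftrightarrow> p \<noteq> [] \<and> set p \<subseteq> V \<and> successively (\<lambda>a b. (a, b) \<in> E) p"
  by (simp add: allowed_path_def successively_conv_nth)

lemma regular_ins:
  assumes "regular_seq w" "i \<le> length w"
  shows "regular_seq (ins a i w) \<longleftrightarrow> (i = 0 \<or> a \<noteq> w ! (i - 1)) \<and> (i = length w \<or> a \<noteq> w ! i)"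
  using assms
proof (induction w arbitrary: i)
  case Nil
  then show ?case by (simp add: regular_seq_succ)
next
  case (Cons c w)
  show ?case
  proof (cases i)
    case 0
    then show ?thesis using Cons.prems by (auto simp: regular_seq_succ successively_Cons)
  next
    case (Suc i')
    have rw: "regular_seq w" using Cons.prems by (auto simp: regular_seq_succ successively_Cons)
    have IH: "regular_seq (ins a i' w) \<longleftrightarrow> (i' = 0 \<or> a \<noteq> w ! (i' - 1)) \<and> (i' = length w \<or> a \<noteq> w ! i')"
      using Cons.IH[OF rw] Cons.prems Suc by simp
    show ?thesis
    proof (cases i')
      case 0
      then show ?thesis using Suc Cons.prems
        by (cases w) (auto simp: regular_seq_succ)
    next
      case (Suc i'')
      then obtain d w' where w: "w = d # w'" using Cons.prems \<open>i = Suc i'\<close> by (cases w) auto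
      have "regular_seq (ins a i (c # w)) \<longleftrightarrow> regular_seq (ins a i' w)"
        using \<open>i = Suc i'\<close> Suc w Cons.prems by (simp add: regular_seq_succ)
      then show ?thesis using IH \<open>i = Suc i'\<close> Suc by simp
    qed
  qed
qed

lemma bd_eq: "bd V n x w = (if n = 0 then 0 else if length w = n \<and> regular_seq w
        then (\<Sum>i\<le>n. (-1) ^ i * (\<Sum>v\<in>V. x (ins v i w))) else 0)"
  by (simp add: bd_def ins_def)

lemma bd_diff: "bd V n (\<lambda>q. x q - y q) = (\<lambda>q. bd V n x q - bd V n y q)"
  by (auto simp: bd_def sum_subtractf right_diff_distrib)

lemma bd_zero: "bd V n (\<lambda>_. 0) = (\<lambda>_. 0)"
  by (auto simp: bd_def)

lemma Pch_diff: "x \<in> Pch V E n \<Longrightarrow> y \<in> Pch V E n \<Longrightarrow> (\<lambda>q. x q - y q) \<in> Pch V E n"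
  by (auto simp: Pch_def) (metis diff_self)+

lemma Pch_zero: "(\<lambda>_. 0) \<in> Pch V E n"
  by (auto simp: Pch_def)

lemma Omega_diff: "x \<in> Omega V E n \<Longrightarrow> y \<in> Omega V E n \<Longrightarrow> (\<lambda>q. x q - y q) \<in> Omega V E n"
  by (auto simp: Omega_def bd_diff intro: Pch_diff)

lemma Omega_zero: "(\<lambda>_. 0) \<in> Omega V E n"
  by (auto simp: Omega_def bd_zero Pch_zero)

lemma cycles_diff: "x \<in> cycles V E n \<Longrightarrow> y \<in> cycles V E n \<Longrightarrow> (\<lambda>q. x q - y q) \<in> cycles V E n"
  by (auto simp: cycles_def bd_diff intro: Omega_diff)

lemma boundaries_diff: "x \<in> boundaries V E n \<Longrightarrow> y \<in> boundaries V E n \<Longrightarrow> (\<lambda>q. x q - y q) \<in> boundaries V E n"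
  unfolding boundaries_def
proof -
  assume "x \<in> bd V (Suc n) ` Omega V E (Suc n)" "y \<in> bd V (Suc n) ` Omega V E (Suc n)"
  then obtain a b where "a \<in> Omega V E (Suc n)" "b \<in> Omega V E (Suc n)" "x = bd V (Suc n) a" "y = bd V (Suc n) b"
    by auto
  then show "(\<lambda>q. x q - y q) \<in> bd V (Suc n) ` Omega V E (Suc n)"
    by (intro image_eqI[of _ _ "\<lambda>q. a q - b q"]) (auto simp: bd_diff intro: Omega_diff)
qed

lemma boundaries_zero: "(\<lambda>_. 0) \<in> boundaries V E n"
  unfolding boundaries_def by (rule image_eqI[of _ _ "\<lambda>_. 0"]) (auto simp: bd_zero Omega_zero)

lemma boundaries_add: "x \<in> boundaries V E n \<Longrightarrow> y \<in> boundaries V E n \<Longrightarrow> (\<lambda>q. x q + y q) \<in> boundaries V E n"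
proof -
  assume a: "x \<in> boundaries V E n" "y \<in> boundaries V E n"
  have "(\<lambda>q. 0 - y q) \<in> boundaries V E n" using boundaries_diff[OF boundaries_zero a(2)] .
  from boundaries_diff[OF a(1) this] show ?thesis by simp
qed

lemma self_in_hclass: "x \<in> cycles V E n \<Longrightarrow> x \<in> hclass V E n x"
  by (simp add: hclass_def boundaries_zero)

lemma hclass_eq:
  assumes "x \<in> cycles V E n" "y \<in> cycles V E n"
  shows "hclass V E n x = hclass V E n y \<longleftrightarrow> (\<lambda>p. x p - y p) \<in> boundaries V E n"
proof
  assume "hclass V E n x = hclass V E n y"
  then have "x \<in> hclass V E n y" using self_in_hclass[OF assms(1)] by simp
  then have "(\<lambda>p. y p - x p) \<in> boundaries V E n" by (simp add: hclass_def)
  from boundaries_diff[OF boundaries_zero this] show "(\<lambda>p. x p - y p) \<in> boundaries V E n" by simp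
next
  assume d: "(\<lambda>p. x p - y p) \<in> boundaries V E n"
  have "(\<lambda>p. x p - t p) \<in> boundaries V E n \<longleftrightarrow> (\<lambda>p. y p - t p) \<in> boundaries V E n" for t
  proof
    assume "(\<lambda>p. x p - t p) \<in> boundaries V E n"
    from boundaries_diff[OF this d] show "(\<lambda>p. y p - t p) \<in> boundaries V E n" by simp
  next
    assume "(\<lambda>p. y p - t p) \<in> boundaries V E n"
    from boundaries_add[OF d this] show "(\<lambda>p. x p - t p) \<in> boundaries V E n" by simp
  qed
  then show "hclass V E n x = hclass V E n y" by (simp add: hclass_def)
qed


definition bdf :: "'a set \<Rightarrow> nat \<Rightarrow> ('a list \<Rightarrow> 'r::comm_ring_1) \<Rightarrow> ('a list \<Rightarrow> 'r)" where
  "bdf V n x w = (\<Sum>i\<le>n. (-1) ^ i * (\<Sum>v\<in>V. x (ins v i w)))"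

lemma bd_bdf: "bd V n x w = (if n = 0 then 0 else if length w = n \<and> regular_seq w then bdf V n x w else 0)"
  by (simp add: bd_eq bdf_def)

lemma tri_swap:
  fixes g :: "nat \<Rightarrow> nat \<Rightarrow> 'b::comm_monoid_add"
  shows "(\<Sum>i\<le>n. \<Sum>j\<le>i. g i j) = (\<Sum>j\<le>n. \<Sum>i\<in>{j..n}. g i j)"
proof (induction n)
  case 0
  then show ?case by simp
next
  case (Suc n)
  have "(\<Sum>j\<le>Suc n. \<Sum>i\<in>{j..Suc n}. g i j) = (\<Sum>j\<le>n. \<Sum>i\<in>{j..Suc n}. g i j) + g (Suc n) (Suc n)"
    by simp
  also have "(\<Sum>j\<le>n. \<Sum>i\<in>{j..Suc n}. g i j) = (\<Sum>j\<le>n. (\<Sum>i\<in>{j..n}. g i j) + g (Suc n) j)"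
    by (intro sum.cong) (auto simp: atLeastAtMostSuc_conv add.commute)
  finally show ?case using Suc by (simp add: sum.distrib add.assoc)
qed

lemma split_Suc_range:
  fixes h :: "nat \<Rightarrow> 'b::comm_monoid_add"
  assumes "i \<le> n"
  shows "(\<Sum>j\<le>Suc n. h j) = (\<Sum>j\<le>i. h j) + (\<Sum>j\<in>{i..n}. h (Suc j))"
proof -
  have "{..Suc n} = {..i} \<union> {Suc i..Suc n}" using assms by auto
  then have "(\<Sum>j\<le>Suc n. h j) = (\<Sum>j\<le>i. h j) + (\<Sum>j\<in>{Suc i..Suc n}. h j)"
    by (simp add: sum.union_disjoint)
  also have "(\<Sum>j\<in>{Suc i..Suc n}. h j) = (\<Sum>j\<in>{i..n}. h (Suc j))"
    by (rule sum.shift_bounds_cl_Suc_ivl)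
  finally show ?thesis .
qed

lemma bdf_bdf:
  assumes "length w = n"
  shows "bdf V n (bdf V (Suc n) x) w = 0"
proof -
  define F where "F i j = (\<Sum>a\<in>V. \<Sum>b\<in>V. x (ins b j (ins a i w)))" for i j
  define K where "K i j = (\<Sum>a\<in>V. \<Sum>b\<in>V. x (ins a i (ins b j w)))" for i j
  have s1: "bdf V n (bdf V (Suc n) x) w = (\<Sum>i\<le>n. \<Sum>j\<le>Suc n. (-1) ^ i * (-1) ^ j * F i j)"
  proof -
    have "(\<Sum>a\<in>V. \<Sum>j\<le>Suc n. (-1) ^ j * (\<Sum>b\<in>V. x (ins b j (ins a i w)))) =
          (\<Sum>j\<le>Suc n. (-1) ^ j * F i j)" for i
      unfolding F_def sum_distrib_left by (rule sum.swap)
    then show ?thesis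
      unfolding bdf_def by (simp only: sum_distrib_left mult.assoc)
  qed
  have FK1: "F i j = K j i" for i j
    unfolding F_def K_def by (rule sum.swap)
  have FK2: "F i (Suc j) = K i j" if "i \<le> j" "j \<le> n" for i j
    unfolding F_def K_def using that assms by (simp add: ins_ins_swap)
  have "bdf V n (bdf V (Suc n) x) w =
     (\<Sum>i\<le>n. (\<Sum>j\<le>i. (-1) ^ i * (-1) ^ j * K j i) + (\<Sum>j\<in>{i..n}. (-1) ^ i * (-1) ^ Suc j * K i j))"
    unfolding s1
  proof (intro sum.cong refl)
    fix i assume i: "i \<in> {..n}"
    have e2: "(\<Sum>j\<in>{i..n}. (-1) ^ i * (-1) ^ Suc j * F i (Suc j)) = (\<Sum>j\<in>{i..n}. (-1) ^ i * (-1) ^ Suc j * K i j)"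
      by (intro sum.cong refl) (simp add: FK2)
    show "(\<Sum>j\<le>Suc n. (-1) ^ i * (-1) ^ j * F i j) =
      (\<Sum>j\<le>i. (-1) ^ i * (-1) ^ j * K j i) + (\<Sum>j\<in>{i..n}. (-1) ^ i * (-1) ^ Suc j * K i j)"
      using i unfolding split_Suc_range[of i n, OF i[simplified]] e2 by (simp only: FK1)
  qed
  also have "\<dots> = (\<Sum>i\<le>n. \<Sum>j\<le>i. (-1) ^ i * (-1) ^ j * K j i) + (\<Sum>i\<le>n. \<Sum>j\<in>{i..n}. (-1) ^ i * (-1) ^ Suc j * K i j)"
    by (simp add: sum.distrib)
  also have "(\<Sum>i\<le>n. \<Sum>j\<le>i. (-1) ^ i * (-1) ^ j * K j i) = (\<Sum>j\<le>n. \<Sum>i\<in>{j..n}. (-1) ^ i * (-1) ^ j * K j i)"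
    by (rule tri_swap)
  also have "(\<Sum>i\<le>n. \<Sum>j\<in>{i..n}. (-1) ^ i * (-1) ^ Suc j * K i j) = - (\<Sum>j\<le>n. \<Sum>i\<in>{j..n}. (-1) ^ i * (-1) ^ j * K j i)"
    by (simp add: sum_negf[symmetric] mult.commute mult.left_commute)
  finally show ?thesis by simp
qed

lemma bdf_nonreg:
  assumes "finite V" "regular_seq w" "length w = n"
  shows "bdf V n (\<lambda>s. if regular_seq s then 0 else y s) w = 0"
proof -
  define A where "A i = (if 0 < i \<and> w ! (i - 1) \<in> V then y (ins (w ! (i - 1)) i w) else 0)" for i
  define B where "B i = (if i < n \<and> w ! i \<in> V then y (ins (w ! i) i w) else 0)" for i
  have step: "(\<Sum>a\<in>V. (if regular_seq (ins a i w) then 0 else y (ins a i w))) = A i + B i" if "i \<le> n" for i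
  proof -
    have "(\<Sum>a\<in>V. (if regular_seq (ins a i w) then 0 else y (ins a i w))) =
      (\<Sum>a\<in>V. (if a = w ! (i - 1) then (if 0 < i then y (ins a i w) else 0) else 0)
             + (if a = w ! i then (if i < n then y (ins a i w) else 0) else 0))"
    proof (intro sum.cong refl)
      fix a assume "a \<in> V"
      have ne: "0 < i \<Longrightarrow> i < n \<Longrightarrow> w ! (i - 1) \<noteq> w ! i"
        using assms(2,3) unfolding regular_seq_def
        by (metis Suc_diff_1 Suc_lessD)
      show "(if regular_seq (ins a i w) then 0 else y (ins a i w)) =
        (if a = w ! (i - 1) then (if 0 < i then y (ins a i w) else 0) else 0)
             + (if a = w ! i then (if i < n then y (ins a i w) else 0) else 0)"
      proof -
        have R: "regular_seq (ins a i w) \<longleftrightarrow> (i = 0 \<or> a \<noteq> w ! (i - 1)) \<and> (i = n \<or> a \<noteq> w ! i)"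
          using regular_ins[OF assms(2), of i a] that assms(3) by simp
        show ?thesis
          by (cases "0 < i"; cases "i < n"; cases "a = w ! (i - 1)"; cases "a = w ! i") (use R ne that in simp_all)
      qed
    qed
    also have "\<dots> = A i + B i"
      using assms(1) by (simp add: sum.distrib A_def B_def)
    finally show ?thesis .
  qed
  have "bdf V n (\<lambda>s. if regular_seq s then 0 else y s) w = (\<Sum>i\<le>n. (-1) ^ i * A i) + (\<Sum>i\<le>n. (-1) ^ i * B i)"
    unfolding bdf_def by (simp add: step distrib_left sum.distrib)
  also have "(\<Sum>i\<le>n. (-1) ^ i * A i) = (\<Sum>i<n. (-1) ^ Suc i * A (Suc i))"
    by (subst sum.atMost_shift) (simp add: A_def)
  also have "\<dots> = - (\<Sum>i<n. (-1) ^ i * B i)"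
    unfolding sum_negf[symmetric] by (intro sum.cong refl) (simp add: A_def B_def ins_Suc_same assms(3))
  also have "(\<Sum>i\<le>n. (-1) ^ i * B i) = (\<Sum>i<n. (-1) ^ i * B i)"
    by (simp add: lessThan_Suc_atMost[symmetric] B_def)
  finally show ?thesis by simp
qed

lemma bdf_cong:
  assumes "\<And>s. length s = Suc n \<Longrightarrow> x s = y s" "length w = n"
  shows "bdf V n x w = bdf V n y w"
  unfolding bdf_def using assms by (intro sum.cong refl arg_cong2[where f="(*)"]) auto

lemma bd_bd:
  assumes "finite V"
  shows "bd V n (bd V (Suc n) x) = (\<lambda>_. 0)"
proof
  fix w
  show "bd V n (bd V (Suc n) x) w = 0"
  proof (cases "n \<noteq> 0 \<and> length w = n \<and> regular_seq w")
    case False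
    then show ?thesis by (auto simp: bd_bdf)
  next
    case True
    have "bd V n (bd V (Suc n) x) w = bdf V n (bd V (Suc n) x) w"
      using True by (simp add: bd_bdf)
    also have "\<dots> = bdf V n (\<lambda>s. bdf V (Suc n) x s - (if regular_seq s then 0 else bdf V (Suc n) x s)) w"
      by (rule bdf_cong) (use True in \<open>auto simp: bd_bdf\<close>)
    also have "\<dots> = bdf V n (bdf V (Suc n) x) w - bdf V n (\<lambda>s. if regular_seq s then 0 else bdf V (Suc n) x s) w"
      unfolding bdf_def by (simp add: sum_subtractf right_diff_distrib)
    also have "\<dots> = 0"
      using bdf_bdf[of w n V x] bdf_nonreg[OF assms, of w n] True by simp
    finally show ?thesis .
  qed
qed


locale mcol =
  fixes V :: "'a set" and E :: "('a \<times> 'a) set" and f :: "'a \<Rightarrow> real"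
  assumes fd: "finite_digraph V E" and zd: "zero_deg_hyp V E f"
begin

abbreviation "Z \<equiv> collapse_set V E f"
abbreviation "V' \<equiv> collapse_V V E f"
abbreviation "E' \<equiv> collapse_E V E f"

definition inn :: "'a \<Rightarrow> 'a" where "inn v = (THE u. (u, v) \<in> E)"
definition out :: "'a \<Rightarrow> 'a" where "out v = (THE w. (v, w) \<in> E)"

lemma finV: "finite V"
  using fd by (simp add: finite_digraph_def)

lemma E_V: "(a, b) \<in> E \<Longrightarrow> a \<in> V \<and> b \<in> V"
  using fd by (auto simp: finite_digraph_def)

lemma noloop: "(v, v) \<notin> E"
  using fd by (simp add: finite_digraph_def)

lemma Z_props:
  assumes "v \<in> Z"
  shows "v \<in> V" "(inn v, v) \<in> E" "(v, out v) \<in> E" "(inn v, out v) \<in> E"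
    "\<And>u. (u, v) \<in> E \<Longrightarrow> u = inn v" "\<And>w. (v, w) \<in> E \<Longrightarrow> w = out v"
proof -
  have vV: "v \<in> V" "f v = 0" and ex: "\<exists>u w. (u, v) \<in> E \<and> (v, w) \<in> E \<and> (u, w) \<in> E"
    using assms by (auto simp: collapse_set_def)
  then have c: "card {w. (v, w) \<in> E} = 1" "card {u. (u, v) \<in> E} = 1"
    using zd by (auto simp: zero_deg_hyp_def)
  obtain w0 where w0: "{w. (v, w) \<in> E} = {w0}" using c(1) by (rule card_1_singletonE)
  obtain u0 where u0: "{u. (u, v) \<in> E} = {u0}" using c(2) by (rule card_1_singletonE)
  have ow: "out v = w0" unfolding out_def using w0 by (auto intro!: the_equality)
  have iu: "inn v = u0" unfolding inn_def using u0 by (auto intro!: the_equality)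
  show "v \<in> V" by fact
  show "(inn v, v) \<in> E" using iu u0 by auto
  show "(v, out v) \<in> E" using ow w0 by auto
  show "\<And>u. (u, v) \<in> E \<Longrightarrow> u = inn v" using iu u0 by auto
  show "\<And>w. (v, w) \<in> E \<Longrightarrow> w = out v" using ow w0 by auto
  obtain u w where uw: "(u, v) \<in> E" "(v, w) \<in> E" "(u, w) \<in> E" using ex by blast
  have "u \<in> {u. (u, v) \<in> E}" "w \<in> {w. (v, w) \<in> E}" using uw by auto
  then have "u = inn v" "w = out v" using iu u0 ow w0 by auto
  then show "(inn v, out v) \<in> E" using uw by simp
qed

lemma inn_notZ: "v \<in> Z \<Longrightarrow> inn v \<notin> Z"
proof
  assume v: "v \<in> Z" and u: "inn v \<in> Z"
  have "v = out (inn v)" using Z_props(6)[OF u] Z_props(2)[OF v] by blast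
  moreover have "out v = out (inn v)" using Z_props(6)[OF u] Z_props(4)[OF v] by blast
  ultimately show False using Z_props(3)[OF v] noloop by metis
qed

lemma out_notZ: "v \<in> Z \<Longrightarrow> out v \<notin> Z"
proof
  assume v: "v \<in> Z" and w: "out v \<in> Z"
  have "v = inn (out v)" using Z_props(5)[OF w] Z_props(3)[OF v] by blast
  moreover have "inn v = inn (out v)" using Z_props(5)[OF w] Z_props(4)[OF v] by blast
  ultimately show False using Z_props(2)[OF v] noloop by metis
qed

lemma inn_V: "v \<in> Z \<Longrightarrow> inn v \<in> V"
  using Z_props(2) E_V by blast

lemma allowed': "allowed_path V' E' p \<longleftrightarrow> allowed_path V E p \<and> set p \<inter> Z = {}"
  unfolding allowed_path_def collapse_V_def collapse_E_def
  by (auto simp: subset_iff disjoint_iff)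

lemma Pch'_sub: "Pch V' E' n \<subseteq> Pch V E n"
  by (auto simp: Pch_def allowed')

lemma bd_V':
  assumes "x \<in> Pch V' E' m"
  shows "bd V n x = bd V' n x"
proof -
  have "(\<Sum>v\<in>V. x (ins v i w)) = (\<Sum>v\<in>V'. x (ins v i w))" for i w
  proof (rule sum.mono_neutral_right[OF finV])
    show "V' \<subseteq> V" by (auto simp: collapse_V_def)
    show "\<forall>v\<in>V - V'. x (ins v i w) = 0"
    proof
      fix v assume "v \<in> V - V'"
      then have "v \<in> Z" by (auto simp: collapse_V_def)
      moreover have "v \<in> set (ins v i w)" by (simp add: ins_def)
      ultimately show "x (ins v i w) = 0" using assms by (auto simp: Pch_def allowed')
    qed
  qed
  then show ?thesis by (intro ext) (simp add: bd_eq)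
qed

lemma Omega'_sub: "Omega V' E' n \<subseteq> Omega V E n"
proof
  fix x :: "'a list \<Rightarrow> 'r::comm_ring_1" assume "x \<in> Omega V' E' n"
  then have "x \<in> Pch V' E' n" "bd V' n x \<in> Pch V' E' (n - 1)" by (auto simp: Omega_def)
  then show "x \<in> Omega V E n" using Pch'_sub bd_V'[of x n n] by (auto simp: Omega_def)
qed

lemma cycles'_sub: "cycles V' E' n \<subseteq> cycles V E n"
  using Omega'_sub bd_V' by (fastforce simp: cycles_def Omega_def)

lemma boundaries'_sub: "boundaries V' E' n \<subseteq> boundaries V E n"
proof
  fix z :: "'a list \<Rightarrow> 'r::comm_ring_1" assume "z \<in> boundaries V' E' n"
  then obtain c where c: "c \<in> Omega V' E' (Suc n)" "z = bd V' (Suc n) c" by (auto simp: boundaries_def)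
  then have "z = bd V (Suc n) c" using bd_V'[of c "Suc n" "Suc n"] by (simp add: Omega_def)
  then show "z \<in> boundaries V E n" using c Omega'_sub by (auto simp: boundaries_def)
qed

definition hh :: "('a list \<Rightarrow> 'r::comm_ring_1) \<Rightarrow> 'a list \<Rightarrow> 'r" where
  "hh x q = (case q of b # c # r \<Rightarrow> if c \<in> Z \<and> b = inn c then x (c # r) else 0 | _ \<Rightarrow> 0)"

lemma hh_simps[simp]: "hh x [] = 0" "hh x [b] = 0"
  "hh x (b # c # r) = (if c \<in> Z \<and> b = inn c then x (c # r) else 0)"
  by (simp_all add: hh_def)

lemma hh_zero: "hh (\<lambda>_. 0) = (\<lambda>_. 0)"
proof
  fix q show "hh (\<lambda>_. 0) q = 0" by (simp add: hh_def split: list.split)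
qed

lemma hh_Pch: "x \<in> Pch V E m \<Longrightarrow> hh x \<in> Pch V E (Suc m)"
  unfolding Pch_def
proof (clarify)
  fix q assume x: "\<forall>p. x p \<noteq> 0 \<longrightarrow> length p = Suc m \<and> allowed_path V E p" and q: "hh x q \<noteq> 0"
  then obtain b c r where qe: "q = b # c # r" and C: "c \<in> Z" "b = inn c" and nz: "x (c # r) \<noteq> 0"
    by (auto simp: hh_def split: list.splits if_splits)
  then have "length (c # r) = Suc m" "allowed_path V E (c # r)" using x by auto
  then show "length q = Suc (Suc m) \<and> allowed_path V E q"
    using qe C inn_V Z_props(2)[OF C(1)] by (auto simp: allowed_succ)
qed

lemma hh_vanish: "x \<in> Pch V' E' m \<Longrightarrow> hh x = (\<lambda>_. 0)"
proof
  fix q assume x: "x \<in> Pch V' E' m"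
  show "hh x q = 0"
  proof (cases q rule: remdups_adj.cases)
    case (3 b c r)
    show ?thesis
    proof (cases "c \<in> Z")
      case True
      then have "\<not> allowed_path V' E' (c # r)" by (auto simp: allowed')
      then have "x (c # r) = 0" using x by (auto simp: Pch_def)
      then show ?thesis using 3 by simp
    qed (use 3 in simp)
  qed auto
qed


lemma sum_single:
  assumes "finite A" "c \<in> A" "\<And>v. v \<in> A \<Longrightarrow> v \<noteq> c \<Longrightarrow> g v = 0"
  shows "sum g A = g c"
proof -
  have "sum g A = g c + sum g (A - {c})" using assms by (simp add: sum.remove)
  also have "sum g (A - {c}) = 0" using assms by (intro sum.neutral) auto
  finally show ?thesis by simp
qed

lemma F1:
  assumes x: "x \<in> Pch V E 0"
  shows "x [q0] - bd V 1 (hh x) [q0] - hh (bd V 0 x) [q0] =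
    (if q0 \<in> Z then 0 else x [q0]) + (\<Sum>a\<in>V. if a \<in> Z \<and> q0 = inn a then x [a] else 0)"
proof -
  have b: "bd V 1 (hh x) [q0] = (\<Sum>v\<in>V. hh x [v, q0]) - (\<Sum>v\<in>V. hh x [q0, v])"
    by (simp add: bd_eq regular_seq_def)
  have t0: "(\<Sum>v\<in>V. hh x [v, q0]) = (if q0 \<in> Z then x [q0] else 0)"
  proof (cases "q0 \<in> Z")
    case True
    then have "(\<Sum>v\<in>V. hh x [v, q0]) = hh x [inn q0, q0]"
      by (intro sum_single finV inn_V) auto
    then show ?thesis using True by simp
  qed simp
  have t1: "(\<Sum>v\<in>V. hh x [q0, v]) = (\<Sum>a\<in>V. if a \<in> Z \<and> q0 = inn a then x [a] else 0)"
    by simp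
  show ?thesis using b t0 t1 by simp
qed

lemma F2:
  assumes x: "x \<in> Pch V E m" and reg: "regular_seq (q0 # q1 # r)" and len: "length (q0 # q1 # r) = Suc m"
  shows "x (q0 # q1 # r) - bd V (Suc m) (hh x) (q0 # q1 # r) - hh (bd V m x) (q0 # q1 # r) =
    (if q0 \<in> Z \<or> (q1 \<in> Z \<and> q0 = inn q1) then 0 else x (q0 # q1 # r)) +
    (\<Sum>a\<in>V. if a \<in> Z \<and> q0 = inn a then x (a # q1 # r) else 0)"
proof -
  define l where "l = length r"
  have m: "m = Suc l" using len l_def by simp
  define C where "C = (q1 \<in> Z \<and> q0 = inn q1)"
  define M where "M = (\<Sum>i\<le>l. (-1) ^ i * (\<Sum>v\<in>V. x (ins v (Suc i) (q1 # r))))"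
  define S1 where "S1 = (\<Sum>a\<in>V. if a \<in> Z \<and> q0 = inn a then x (a # q1 # r) else 0)"
  have T0: "(\<Sum>v\<in>V. hh x (v # q0 # q1 # r)) = (if q0 \<in> Z then x (q0 # q1 # r) else 0)"
  proof (cases "q0 \<in> Z")
    case True
    then have "(\<Sum>v\<in>V. hh x (v # q0 # q1 # r)) = hh x (inn q0 # q0 # q1 # r)"
      by (intro sum_single finV inn_V) auto
    then show ?thesis using True by simp
  qed simp
  have T1: "(\<Sum>v\<in>V. hh x (q0 # v # q1 # r)) = S1" by (simp add: S1_def)
  have T2: "(\<Sum>v\<in>V. hh x (q0 # q1 # ins v i r)) = (if C then (\<Sum>v\<in>V. x (ins v (Suc i) (q1 # r))) else 0)" for i
    by (cases C) (auto simp: C_def)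
  have bdh: "bd V (Suc m) (hh x) (q0 # q1 # r) = (if q0 \<in> Z then x (q0 # q1 # r) else 0) - S1 + (if C then M else 0)"
  proof -
    have "bd V (Suc m) (hh x) (q0 # q1 # r) = (\<Sum>i\<le>Suc (Suc l). (-1) ^ i * (\<Sum>v\<in>V. hh x (ins v i (q0 # q1 # r))))"
      using reg len m by (simp add: bd_eq)
    also have "\<dots> = (\<Sum>v\<in>V. hh x (v # q0 # q1 # r)) - (\<Sum>v\<in>V. hh x (q0 # v # q1 # r))
        + (\<Sum>i\<le>l. (-1) ^ i * (\<Sum>v\<in>V. hh x (q0 # q1 # ins v i r)))"
      by (simp only: sum.atMost_Suc_shift) simp
    also have "(\<Sum>i\<le>l. (-1) ^ i * (\<Sum>v\<in>V. hh x (q0 # q1 # ins v i r))) = (if C then M else 0)"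
      by (simp only: T2 M_def) simp
    finally show ?thesis using T0 T1 by simp
  qed
  have hbd: "hh (bd V m x) (q0 # q1 # r) = (if C then x (q0 # q1 # r) - M else 0)"
  proof (cases C)
    case True
    have reg': "regular_seq (q1 # r)" using reg by (simp add: regular_seq_succ)
    have "bd V m x (q1 # r) = (\<Sum>i\<le>Suc l. (-1) ^ i * (\<Sum>v\<in>V. x (ins v i (q1 # r))))"
      using reg' m l_def by (simp add: bd_eq)
    also have "\<dots> = (\<Sum>v\<in>V. x (v # q1 # r)) - M"
      by (simp only: sum.atMost_Suc_shift M_def) (simp add: sum_negf)
    also have "(\<Sum>v\<in>V. x (v # q1 # r)) = x (q0 # q1 # r)"
    proof (rule sum_single[OF finV])
      show "q0 \<in> V" using True C_def inn_V by auto
      fix v assume "v \<in> V" "v \<noteq> q0"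
      show "x (v # q1 # r) = 0"
      proof (rule ccontr)
        assume "x (v # q1 # r) \<noteq> 0"
        then have "allowed_path V E (v # q1 # r)" using x by (auto simp: Pch_def)
        then have "(v, q1) \<in> E" by (simp add: allowed_succ)
        then have "v = inn q1" using True C_def Z_props(5) by blast
        then show False using \<open>v \<noteq> q0\<close> True C_def by simp
      qed
    qed
    finally show ?thesis using True C_def by simp
  next
    case False
    then show ?thesis by (auto simp: C_def)
  qed
  have "\<not> (q0 \<in> Z \<and> C)" using inn_notZ C_def by blast
  then show ?thesis
    unfolding bdh hbd S1_def[symmetric] C_def[symmetric]
    by (cases "q0 \<in> Z"; cases C) (simp_all add: algebra_simps)
qed


lemma ins_append_le: "i \<le> length xs \<Longrightarrow> ins b i (xs @ l) = ins b i xs @ l"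
  by (simp add: ins_def)

lemma ins_append_ge: "ins b (length xs + j) (xs @ l) = xs @ ins b j l"
  by (simp add: ins_def)

lemma succ_mid: "successively P (l1 @ a # v # l2) \<Longrightarrow> P a v"
  by (simp add: successively_append_iff)

lemma succ_mid2: "successively P (l1 @ a # b # v # l2) \<Longrightarrow> P b v"
  by (simp add: successively_append_iff)

lemma decomp3:
  assumes "2 \<le> k" "k < length p"
  shows "p = take (k - 2) p @ p ! (k - 2) # p ! (k - 1) # p ! k # drop (Suc k) p"
proof -
  have d1: "drop k p = p ! k # drop (Suc k) p" using assms by (simp add: Cons_nth_drop_Suc)
  have d2: "drop (k - 1) p = p ! (k - 1) # drop k p"
    using assms Cons_nth_drop_Suc[of "k - 1" p] by simp
  have d3: "drop (k - 2) p = p ! (k - 2) # drop (k - 1) p"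
    using assms Cons_nth_drop_Suc[of "k - 2" p] by (simp add: Suc_diff_Suc numeral_2_eq_2)
  show ?thesis using d1 d2 d3 by (metis append_take_drop_id)
qed

lemma neg1_pow_mult_eq0: "((-1::'r::comm_ring_1) ^ c * y = 0) \<longleftrightarrow> y = 0"
proof
  assume "(-1::'r) ^ c * y = 0"
  then have "(-1) ^ c * ((-1::'r) ^ c * y) = 0" by simp
  moreover have "(-1) ^ c * ((-1::'r) ^ c * y) = y"
    by (simp add: mult.assoc[symmetric] power_mult_distrib[symmetric])
  ultimately show "y = 0" by simp
qed simp

lemma allowed_regular: "allowed_path V E p \<Longrightarrow> regular_seq p"
  unfolding allowed_path_def regular_seq_def using noloop by metis

lemma interior:
  assumes x: "x \<in> Omega V E m" and nz: "x p \<noteq> 0" and k: "2 \<le> k" "k < length p"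
  shows "p ! k \<notin> Z"
proof
  assume vZ: "p ! k \<in> Z"
  define xs where "xs = take (k - 2) p"
  define a where "a = p ! (k - 2)"
  define u where "u = p ! (k - 1)"
  define v where "v = p ! k"
  define ys where "ys = drop (Suc k) p"
  have pe: "p = xs @ a # u # v # ys" unfolding xs_def a_def u_def v_def ys_def using decomp3[OF k] .
  have lxs: "length xs = k - 2" using k by (simp add: xs_def)
  have xP: "x \<in> Pch V E m" and bP: "bd V m x \<in> Pch V E (m - 1)" using x by (auto simp: Omega_def)
  have ap: "allowed_path V E p" and lp: "length p = Suc m" using xP nz by (auto simp: Pch_def)
  have vZ': "v \<in> Z" using vZ v_def by simp
  have suc: "successively (\<lambda>a b. (a, b) \<in> E) p" using ap by (simp add: allowed_succ)
  have uv: "(u, v) \<in> E" using succ_mid[where P="\<lambda>a b. (a, b) \<in> E", of "xs @ [a]" u v ys] suc pe by simp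
  have au: "(a, u) \<in> E" using succ_mid[where P="\<lambda>a b. (a, b) \<in> E", of xs a u "v # ys"] suc pe by simp
  have u_inn: "u = inn v" using Z_props(5)[OF vZ' uv] .
  have a_ne_v: "a \<noteq> v"
  proof
    assume "a = v"
    then have "u = out v" using Z_props(6)[OF vZ'] au by simp
    then show False using Z_props(4)[OF vZ'] u_inn noloop by simp
  qed
  have a_ne_u: "a \<noteq> u" using au noloop by auto
  define w where "w = xs @ a # v # ys"
  have lw: "length w = m" using lp pe by (simp add: w_def)
  have m2: "m \<noteq> 0" using lw w_def by auto
  have regp: "successively (\<noteq>) p" using allowed_regular[OF ap] by (simp add: regular_seq_succ)
  have regw: "regular_seq w"
    using regp a_ne_v unfolding pe w_def regular_seq_succ
    by (auto simp: successively_append_iff successively_Cons)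
  have uV: "u \<in> V" using au E_V by blast
  have inner: "(\<Sum>b\<in>V. x (ins b i w)) = (if i = Suc (length xs) then x p else 0)" if "i \<le> m" for i
  proof (cases "i = Suc (length xs)")
    case True
    have e: "ins b i w = xs @ a # b # v # ys" for b
      using True ins_append_ge[of b xs 1 "a # v # ys"] by (simp add: w_def)
    have "(\<Sum>b\<in>V. x (ins b i w)) = x (ins u i w)"
    proof (rule sum_single[OF finV uV])
      fix b assume "b \<in> V" "b \<noteq> u"
      show "x (ins b i w) = 0"
      proof (rule ccontr)
        assume "x (ins b i w) \<noteq> 0"
        then have "allowed_path V E (xs @ a # b # v # ys)" using xP e by (auto simp: Pch_def)
        then have "(b, v) \<in> E" using succ_mid2[where P="\<lambda>a b. (a, b) \<in> E", of xs a b v ys] by (simp add: allowed_succ)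
        then show False using Z_props(5)[OF vZ'] u_inn \<open>b \<noteq> u\<close> by blast
      qed
    qed
    then show ?thesis using True e pe by simp
  next
    case False
    have "x (ins b i w) = 0" for b
    proof (rule ccontr)
      assume nz': "x (ins b i w) \<noteq> 0"
      have "\<exists>l1 l2. ins b i w = l1 @ a # v # l2"
      proof (cases "i \<le> length xs")
        case True
        then show ?thesis using ins_append_le[OF True, of b "a # v # ys"] by (auto simp: w_def)
      next
        case False
        then have "i \<ge> length xs + 2" using \<open>i \<noteq> Suc (length xs)\<close> by simp
        then obtain j where "i = length xs + 2 + j" using le_Suc_ex by blast
        then show ?thesis using ins_append_ge[of b "xs @ [a, v]" j ys] by (auto simp: w_def)
      qed
      then obtain l1 l2 where "ins b i w = l1 @ a # v # l2" by blast
      moreover have "allowed_path V E (ins b i w)" using nz' xP by (auto simp: Pch_def)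
      ultimately have "(a, v) \<in> E" using succ_mid[where P="\<lambda>a b. (a, b) \<in> E", of l1 a v l2] by (simp add: allowed_succ)
      then show False using Z_props(5)[OF vZ'] u_inn a_ne_u by blast
    qed
    then show ?thesis using False by simp
  qed
  have "bd V m x w = (\<Sum>i\<le>m. (-1) ^ i * (\<Sum>b\<in>V. x (ins b i w)))"
    using m2 lw regw by (simp add: bd_eq)
  also have "\<dots> = (\<Sum>i\<le>m. (-1) ^ i * (if i = Suc (length xs) then x p else 0))"
    by (intro sum.cong refl) (simp add: inner)
  also have "\<dots> = (-1) ^ Suc (length xs) * x p"
    using lxs k lp by (subst sum_single[where c="Suc (length xs)"]) auto
  finally have "bd V m x w \<noteq> 0" using nz neg1_pow_mult_eq0 by metis
  then have "allowed_path V E w" using bP by (auto simp: Pch_def)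
  then have "(a, v) \<in> E" using succ_mid[where P="\<lambda>a b. (a, b) \<in> E", of xs a v ys] by (simp add: allowed_succ w_def)
  then show False using Z_props(5)[OF vZ'] u_inn a_ne_u by blast
qed


lemma Zfree: "(\<And>k. k < length q \<Longrightarrow> q ! k \<notin> Z) \<Longrightarrow> set q \<inter> Z = {}"
  by (auto simp: in_set_conv_nth)

lemma H:
  assumes x: "x \<in> Omega V E m"
    and nz: "x q - bd V (Suc m) (hh x) q - hh (bd V m x) q \<noteq> 0"
  shows "length q = Suc m \<and> allowed_path V' E' q"
proof -
  have xP: "x \<in> Pch V E m" using x by (simp add: Omega_def)
  show ?thesis
  proof (cases "regular_seq q \<and> length q = Suc m")
    case False
    have "x q = 0"
      using False xP allowed_regular by (auto simp: Pch_def)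
    moreover have "bd V (Suc m) (hh x) q = 0" using False by (auto simp: bd_eq)
    moreover have "hh (bd V m x) q = 0"
    proof (cases q rule: remdups_adj.cases)
      case (3 b c r)
      show ?thesis
      proof (rule ccontr)
        assume "hh (bd V m x) q \<noteq> 0"
        then have C: "c \<in> Z" "b = inn c" and bnz: "bd V m x (c # r) \<noteq> 0"
          using 3 by (auto split: if_splits)
        then have "length (c # r) = m" "regular_seq (c # r)" by (auto simp: bd_eq split: if_splits)
        moreover have "b \<noteq> c" using C Z_props(2)[OF C(1)] noloop by auto
        ultimately have "regular_seq q \<and> length q = Suc m" using 3 by (simp add: regular_seq_succ)
        then show False using False by simp
      qed
    qed auto
    ultimately show ?thesis using nz by simp
  next
    case True
    then obtain q0 r0 where qe: "q = q0 # r0" by (cases q) auto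
    show ?thesis
    proof (cases r0)
      case Nil
      then have m0: "m = 0" using True qe by simp
      have nz1: "x [q0] - bd V 1 (hh x) [q0] - hh (bd V 0 x) [q0] \<noteq> 0" using nz qe Nil m0 by simp
      have xP0: "x \<in> Pch V E 0" using xP m0 by simp
      have "(if q0 \<in> Z then 0 else x [q0]) + (\<Sum>a\<in>V. if a \<in> Z \<and> q0 = inn a then x [a] else 0) \<noteq> 0"
        unfolding F1[OF xP0, of q0, symmetric] by (rule nz1)
      then have "(q0 \<notin> Z \<and> x [q0] \<noteq> 0) \<or> (\<exists>a\<in>V. a \<in> Z \<and> q0 = inn a)"
      proof -
        assume h: "(if q0 \<in> Z then 0 else x [q0]) + (\<Sum>a\<in>V. if a \<in> Z \<and> q0 = inn a then x [a] else 0) \<noteq> 0"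
        show ?thesis
        proof (rule ccontr)
          assume "\<not> ?thesis"
          then have "(if q0 \<in> Z then 0 else x [q0]) = 0"
            "(\<Sum>a\<in>V. if a \<in> Z \<and> q0 = inn a then x [a] else 0) = 0"
            by (auto intro!: sum.neutral)
          then show False using h by simp
        qed
      qed
      then have "q0 \<in> V \<and> q0 \<notin> Z"
      proof
        assume "q0 \<notin> Z \<and> x [q0] \<noteq> 0"
        then show ?thesis using xP by (auto simp: Pch_def allowed_path_def)
      next
        assume "\<exists>a\<in>V. a \<in> Z \<and> q0 = inn a"
        then show ?thesis using inn_V inn_notZ by blast
      qed
      then show ?thesis using qe Nil m0 by (simp add: allowed_path_def collapse_V_def)
    next
      case (Cons q1 r)
      have qe2: "q = q0 # q1 # r" using qe Cons by simp
      have nz2: "x (q0 # q1 # r) - bd V (Suc m) (hh x) (q0 # q1 # r) - hh (bd V m x) (q0 # q1 # r) \<noteq> 0"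
        using nz qe2 by simp
      have reg2: "regular_seq (q0 # q1 # r)" "length (q0 # q1 # r) = Suc m" using True qe2 by auto
      have "(if q0 \<in> Z \<or> (q1 \<in> Z \<and> q0 = inn q1) then 0 else x (q0 # q1 # r)) +
          (\<Sum>a\<in>V. if a \<in> Z \<and> q0 = inn a then x (a # q1 # r) else 0) \<noteq> 0"
        unfolding F2[OF xP reg2, symmetric] by (rule nz2)
      then have "(\<not> (q0 \<in> Z \<or> (q1 \<in> Z \<and> q0 = inn q1)) \<and> x (q0 # q1 # r) \<noteq> 0) \<or>
           (\<exists>a\<in>V. a \<in> Z \<and> q0 = inn a \<and> x (a # q1 # r) \<noteq> 0)"
      proof -
        assume h: "(if q0 \<in> Z \<or> (q1 \<in> Z \<and> q0 = inn q1) then 0 else x (q0 # q1 # r)) +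
          (\<Sum>a\<in>V. if a \<in> Z \<and> q0 = inn a then x (a # q1 # r) else 0) \<noteq> 0"
        show ?thesis
        proof (rule ccontr)
          assume "\<not> ?thesis"
          then have "(if q0 \<in> Z \<or> (q1 \<in> Z \<and> q0 = inn q1) then 0 else x (q0 # q1 # r)) = 0"
            "(\<Sum>a\<in>V. if a \<in> Z \<and> q0 = inn a then x (a # q1 # r) else 0) = 0"
            by (auto intro!: sum.neutral)
          then show False using h by simp
        qed
      qed
      then show ?thesis
      proof
        assume A: "\<not> (q0 \<in> Z \<or> (q1 \<in> Z \<and> q0 = inn q1)) \<and> x (q0 # q1 # r) \<noteq> 0"
        then have ap: "allowed_path V E (q0 # q1 # r)" and len: "length (q0 # q1 # r) = Suc m"
          using xP by (auto simp: Pch_def)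
        have "(q0, q1) \<in> E" using ap by (simp add: allowed_succ)
        then have q1Z: "q1 \<notin> Z" using A Z_props(5) by blast
        have "set (q0 # q1 # r) \<inter> Z = {}"
        proof (rule Zfree)
          fix k assume k: "k < length (q0 # q1 # r)"
          show "(q0 # q1 # r) ! k \<notin> Z"
          proof (cases "k < 2")
            case True
            then show ?thesis using A q1Z by (cases k) (auto simp: less_Suc_eq)
          next
            case False
            then show ?thesis using interior[OF x, of "q0 # q1 # r" k] A k by simp
          qed
        qed
        then show ?thesis using ap len qe2 by (simp add: allowed')
      next
        assume "\<exists>a\<in>V. a \<in> Z \<and> q0 = inn a \<and> x (a # q1 # r) \<noteq> 0"
        then obtain a where a: "a \<in> Z" "q0 = inn a" "x (a # q1 # r) \<noteq> 0" by blast
        then have ap: "allowed_path V E (a # q1 # r)" and len: "length (a # q1 # r) = Suc m"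
          using xP by (auto simp: Pch_def)
        have "(a, q1) \<in> E" using ap by (simp add: allowed_succ)
        then have q1o: "q1 = out a" using Z_props(6)[OF a(1)] by blast
        have q0q1: "(q0, q1) \<in> E" using Z_props(4)[OF a(1)] a q1o by simp
        have ap2: "allowed_path V E (q0 # q1 # r)"
          using ap q0q1 inn_V[OF a(1)] a(2) by (simp add: allowed_succ)
        have "set (q0 # q1 # r) \<inter> Z = {}"
        proof (rule Zfree)
          fix k assume k: "k < length (q0 # q1 # r)"
          show "(q0 # q1 # r) ! k \<notin> Z"
          proof (cases "k < 2")
            case True
            then show ?thesis using a q1o inn_notZ out_notZ by (cases k) (auto simp: less_Suc_eq)
          next
            case False
            then have "(a # q1 # r) ! k \<notin> Z" using interior[OF x a(3), of k] k by simp
            moreover have "(a # q1 # r) ! k = (q0 # q1 # r) ! k" using False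
              by (cases k) auto
            ultimately show ?thesis by simp
          qed
        qed
        then show ?thesis using ap2 len qe2 by (simp add: allowed')
      qed
    qed
  qed
qed


lemma bd_bd_app: "bd V n (bd V (Suc n) x) w = 0"
  using bd_bd[OF finV] by metis

lemma surj_step:
  assumes z: "z \<in> cycles V E n"
  shows "\<exists>z'\<in>cycles V' E' n. (\<lambda>p. z p - z' p) \<in> boundaries V E n"
proof -
  have zO: "z \<in> Omega V E n" and bz: "bd V n z = (\<lambda>_. 0)" using z by (auto simp: cycles_def)
  have zP: "z \<in> Pch V E n" using zO by (simp add: Omega_def)
  define y where "y = (\<lambda>q. z q - bd V (Suc n) (hh z) q)"
  have hz0: "hh (bd V n z) = (\<lambda>_. 0)" using bz hh_zero by simp
  have yP': "y \<in> Pch V' E' n"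
    unfolding Pch_def
  proof (clarify)
    fix p assume "y p \<noteq> 0"
    then have "z p - bd V (Suc n) (hh z) p - hh (bd V n z) p \<noteq> 0" using hz0 by (simp add: y_def)
    then show "length p = Suc n \<and> allowed_path V' E' p" by (rule H[OF zO])
  qed
  have "bd V n y = (\<lambda>q. bd V n z q - bd V n (bd V (Suc n) (hh z)) q)"
    unfolding y_def by (rule bd_diff)
  also have "\<dots> = (\<lambda>_. 0)" using bz by (simp add: bd_bd_app)
  finally have by0: "bd V n y = (\<lambda>_. 0)" .
  then have by0': "bd V' n y = (\<lambda>_. 0)" using bd_V'[OF yP'] by simp
  have yC: "y \<in> cycles V' E' n"
    using yP' by0' Pch_zero by (simp add: cycles_def Omega_def)
  have bhz: "bd V (Suc n) (hh z) = (\<lambda>q. z q - y q)" by (simp add: y_def)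
  have "hh z \<in> Omega V E (Suc n)"
    using hh_Pch[OF zP] bhz Pch_diff[OF zP subsetD[OF Pch'_sub yP']] by (simp add: Omega_def)
  then have "(\<lambda>q. z q - y q) \<in> boundaries V E n"
    unfolding boundaries_def bhz[symmetric] by (rule imageI)
  then show ?thesis using yC by blast
qed

lemma inj_step:
  assumes z: "z \<in> cycles V' E' n" and zb: "z \<in> boundaries V E n"
  shows "z \<in> boundaries V' E' n"
proof -
  obtain c where cO: "c \<in> Omega V E (Suc n)" and zc: "z = bd V (Suc n) c"
    using zb by (auto simp: boundaries_def)
  have zP': "z \<in> Pch V' E' n" using z by (simp add: cycles_def Omega_def)
  have hz: "hh (bd V (Suc n) c) = (\<lambda>_. 0)" using hh_vanish[OF zP'] zc by simp
  define c' where "c' = (\<lambda>q. c q - bd V (Suc (Suc n)) (hh c) q - hh (bd V (Suc n) c) q)"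
  have cP': "c' \<in> Pch V' E' (Suc n)"
    unfolding Pch_def
  proof (clarify)
    fix p assume "c' p \<noteq> 0"
    then show "length p = Suc (Suc n) \<and> allowed_path V' E' p" unfolding c'_def by (rule H[OF cO])
  qed
  have c'e: "c' = (\<lambda>q. c q - bd V (Suc (Suc n)) (hh c) q)" using hz by (simp add: c'_def)
  have "bd V (Suc n) c' = (\<lambda>q. bd V (Suc n) c q - bd V (Suc n) (bd V (Suc (Suc n)) (hh c)) q)"
    unfolding c'e by (rule bd_diff)
  also have "\<dots> = z" using zc by (simp add: bd_bd_app)
  finally have "bd V' (Suc n) c' = z" using bd_V'[OF cP'] by simp
  moreover have "c' \<in> Omega V' E' (Suc n)" using cP' zP' calculation by (simp add: Omega_def)
  ultimately show ?thesis unfolding boundaries_def by (metis imageI)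
qed

lemma ind_class:
  assumes x: "x \<in> cycles V' E' n"
  shows "induced_map V E n (hclass V' E' n x) = hclass V E n x"
proof -
  have xC: "x \<in> cycles V E n" using x cycles'_sub by blast
  have "hclass V E n y = hclass V E n x" if "y \<in> hclass V' E' n x" for y
  proof -
    have y': "y \<in> cycles V' E' n" "(\<lambda>p. x p - y p) \<in> boundaries V' E' n" using that by (auto simp: hclass_def)
    then have "y \<in> cycles V E n" "(\<lambda>p. x p - y p) \<in> boundaries V E n" using cycles'_sub boundaries'_sub by blast+
    then show ?thesis using hclass_eq[OF xC] by metis
  qed
  moreover have "x \<in> hclass V' E' n x" using self_in_hclass[OF x] .
  ultimately show ?thesis unfolding induced_map_def by blast
qed

lemma bij_n:
  "bij_betw (induced_map V E n) (path_homology V' E' n :: ('a list \<Rightarrow> 'r::comm_ring_1) set set) (path_homology V E n)"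
  unfolding bij_betw_def
proof
  show "inj_on (induced_map V E n) (path_homology V' E' n :: ('a list \<Rightarrow> 'r) set set)"
  proof (rule inj_onI)
    fix X Y :: "('a list \<Rightarrow> 'r) set"
    assume "X \<in> path_homology V' E' n" "Y \<in> path_homology V' E' n" and eq: "induced_map V E n X = induced_map V E n Y"
    then obtain x y where x: "x \<in> cycles V' E' n" "X = hclass V' E' n x"
      and y: "y \<in> cycles V' E' n" "Y = hclass V' E' n y" by (auto simp: path_homology_def)
    have "hclass V E n x = hclass V E n y" using eq x y ind_class[OF x(1)] ind_class[OF y(1)] by simp
    then have "(\<lambda>p. x p - y p) \<in> boundaries V E n"
      using hclass_eq x(1) y(1) cycles'_sub by blast
    then have "(\<lambda>p. x p - y p) \<in> boundaries V' E' n"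
      using inj_step cycles_diff[OF x(1) y(1)] by blast
    then show "X = Y" using hclass_eq[OF x(1) y(1)] x y by simp
  qed
  show "induced_map V E n ` (path_homology V' E' n :: ('a list \<Rightarrow> 'r) set set) = path_homology V E n"
  proof
    show "induced_map V E n ` (path_homology V' E' n :: ('a list \<Rightarrow> 'r) set set) \<subseteq> path_homology V E n"
      using ind_class cycles'_sub by (fastforce simp: path_homology_def)
  next
    show "path_homology V E n \<subseteq> induced_map V E n ` (path_homology V' E' n :: ('a list \<Rightarrow> 'r) set set)"
    proof
      fix X :: "('a list \<Rightarrow> 'r) set" assume "X \<in> path_homology V E n"
      then obtain z where z: "z \<in> cycles V E n" "X = hclass V E n z" by (auto simp: path_homology_def)
      obtain z' where z': "z' \<in> cycles V' E' n" "(\<lambda>p. z p - z' p) \<in> boundaries V E n"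
        using surj_step[OF z(1)] by blast
      have "X = hclass V E n z'" using z z' hclass_eq cycles'_sub by blast
      also have "\<dots> = induced_map V E n (hclass V' E' n z')" using ind_class[OF z'(1)] by simp
      finally show "X \<in> induced_map V E n ` path_homology V' E' n"
        using z'(1) by (auto simp: path_homology_def)
    qed
  qed
qed

end

theorem theorem1p2:
  fixes V :: "'a set" and E :: "('a \<times> 'a) set" and f :: "'a \<Rightarrow> real"
  assumes "finite_digraph V E"
    and "discrete_morse V E f"
    and "zero_deg_hyp V E f"
  shows "\<forall>n. bij_betw (induced_map V E n)
           (path_homology (collapse_V V E f) (collapse_E V E f) n
              :: ('a list \<Rightarrow> 'r::comm_ring_1) set set)
           (path_homology V E n)"
proof
  fix n
  interpret mcol V E f using assms(1,3) by unfold_locales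
  show "bij_betw (induced_map V E n)
           (path_homology (collapse_V V E f) (collapse_E V E f) n
              :: ('a list \<Rightarrow> 'r::comm_ring_1) set set)
           (path_homology V E n)" by (rule bij_n)
qed

end
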